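(* Let $\mathtt C\subseteq\{0,1\}^{[n]}$ be a nonempty function class. Then $$\dim_{\mathrm{VC}}\mathtt C=\operatorname{reg}\big(T/\pi(I_{\mathtt C})\big),$$ where $\operatorname{reg}$ denotes Castelnuovo–Mumford regularity.
   Context: For $n\in\mathbb N$ let $[n]=\{0,\dots,n-1\}$. A function class is a set $\mathtt C$ of functions $[n]\to\{0,1\}$. The suboplex of $\mathtt C$ is the simplicial complex on vertex set $[n]\times\{0,1\}$ whose facets are the graphs $\{(i,f(i)):i\in[n]\}$ for $f\in\mathtt C$. Fix a field $\Bbbk$, let $S=\Bbbk[x_{(i,b)}: i\in[n], b\in\{0,1\}]$, and let $I_{\mathtt C}\subseteq S$ be the Stanley–Reisner ideal of the suboplex. Let $T=\Bbbk[y_i: i\in[n]]$ and let $\pi:S\to T$ be the surjective ring map with $x_{(i,b)}\mapsto y_i$; $\pi(I_{\mathtt C})$ is the image ideal. A set $U\subseteq[n]$ is shattered by $\mathtt C$ if every function $U\to\{0,1\}$ is a restriction of some $f\in\mathtt C$; the VC dimension $\dim_{\mathrm{VC}}\mathtt C$ is the maximum cardinality of a shattered set. *)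

theory Defs
  imports Main "HOL.Vector_Spaces" "HOL-Library.FuncSet" "HOL-Library.Function_Algebras"
begin

text \<open>A function class on [n] = {0..<n} is a set of extensional functions
  {0..<n} \<rightarrow> bool (bool plays the role of {0,1}).\<close>

definition function_class :: "nat \<Rightarrow> (nat \<Rightarrow> bool) set \<Rightarrow> bool" where
  "function_class n C \<longleftrightarrow> C \<subseteq> ({0..<n} \<rightarrow>\<^sub>E (UNIV :: bool set))"

definition shattered :: "(nat \<Rightarrow> bool) set \<Rightarrow> nat set \<Rightarrow> bool" where
  "shattered C U \<longleftrightarrow> (\<forall>g \<in> U \<rightarrow>\<^sub>E (UNIV :: bool set). \<exists>f\<in>C. \<forall>i\<in>U. f i = g i)"

definition vc_dim :: "nat \<Rightarrow> (nat \<Rightarrow> bool) set \<Rightarrow> nat" where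
  "vc_dim n C = Max {card U | U. U \<subseteq> {0..<n} \<and> shattered C U}"

definition suboplex_face :: "nat \<Rightarrow> (nat \<Rightarrow> bool) set \<Rightarrow> (nat \<times> bool) set \<Rightarrow> bool" where
  "suboplex_face n C \<sigma> \<longleftrightarrow> (\<exists>f\<in>C. \<sigma> \<subseteq> {(i, f i) | i. i < n})"

text \<open>Monomials of S = k[x_(i,b)] are exponent vectors a :: nat \<times> bool \<Rightarrow> nat
  supported on [n] \<times> {0,1}; monomials of T = k[y_i] are exponent vectors
  e :: nat \<Rightarrow> nat supported on [n].\<close>

definition monS :: "nat \<Rightarrow> (nat \<times> bool \<Rightarrow> nat) set" where
  "monS n = {a. \<forall>i b. n \<le> i \<longrightarrow> a (i, b) = 0}"

definition monT :: "nat \<Rightarrow> (nat \<Rightarrow> nat) set" where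
  "monT n = {e. \<forall>i. n \<le> i \<longrightarrow> e i = 0}"

text \<open>The Stanley--Reisner ideal I_C is the monomial ideal spanned by the monomials
  whose support is a non-face; we record its set of monomials.\<close>

definition SR_monomials :: "nat \<Rightarrow> (nat \<Rightarrow> bool) set \<Rightarrow> (nat \<times> bool \<Rightarrow> nat) set" where
  "SR_monomials n C = {a \<in> monS n. \<not> suboplex_face n C {v. a v \<noteq> 0}}"

text \<open>The ring map \<pi> : x_(i,b) \<mapsto> y_i on monomials.\<close>

definition pi_mon :: "(nat \<times> bool \<Rightarrow> nat) \<Rightarrow> (nat \<Rightarrow> nat)" where
  "pi_mon a = (\<lambda>i. a (i, False) + a (i, True))"

text \<open>\<pi>(I_C) is spanned by the images of the monomials of I_C, hence is the monomial
  ideal whose monomials are exactly these images.\<close>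

definition image_ideal_monomials :: "nat \<Rightarrow> (nat \<Rightarrow> bool) set \<Rightarrow> (nat \<Rightarrow> nat) set" where
  "image_ideal_monomials n C = pi_mon ` SR_monomials n C"

text \<open>M = T/J has k-basis the standard monomials (monomials of T not in J).
  Tor_i^T(M,k)_j is computed by the Koszul complex K(y_0,..,y_{n-1}; M), whose
  degree-j part in homological degree i has k-basis the pairs (m, F) with m standard,
  F \<subseteq> [n], |F| = i and deg m + |F| = j.  Chains are coefficient functions.\<close>

definition std_mons :: "nat \<Rightarrow> (nat \<Rightarrow> nat) set \<Rightarrow> (nat \<Rightarrow> nat) set" where
  "std_mons n J = monT n - J"

definition mdeg :: "nat \<Rightarrow> (nat \<Rightarrow> nat) \<Rightarrow> nat" where
  "mdeg n e = (\<Sum>i<n. e i)"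

definition koszul_basis :: "nat \<Rightarrow> (nat \<Rightarrow> nat) set \<Rightarrow> nat \<Rightarrow> nat \<Rightarrow> ((nat \<Rightarrow> nat) \<times> nat set) set" where
  "koszul_basis n J i j =
     {(e, F). e \<in> std_mons n J \<and> F \<subseteq> {0..<n} \<and> card F = i \<and> mdeg n e + i = j}"

definition koszul_chains :: "'k itself \<Rightarrow> nat \<Rightarrow> (nat \<Rightarrow> nat) set \<Rightarrow> nat \<Rightarrow> nat \<Rightarrow>
    (((nat \<Rightarrow> nat) \<times> nat set) \<Rightarrow> 'k::field) set" where
  "koszul_chains _ n J i j = {c. \<forall>x. c x \<noteq> 0 \<longrightarrow> x \<in> koszul_basis n J i j}"

text \<open>Koszul differential: m \<otimes> e_F \<mapsto> \<Sum>_{k\<in>F} (-1)^{#{l\<in>F. l<k}} (y_k m) \<otimes> e_{F-{k}},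
  where y_k m is zero in M when it lies in J.\<close>

definition koszul_d :: "nat \<Rightarrow> (nat \<Rightarrow> nat) set \<Rightarrow> (((nat \<Rightarrow> nat) \<times> nat set) \<Rightarrow> 'k::field)
    \<Rightarrow> (((nat \<Rightarrow> nat) \<times> nat set) \<Rightarrow> 'k)" where
  "koszul_d n J c = (\<lambda>(e, G).
     if e \<in> std_mons n J then
       (\<Sum>k \<in> {k. k < n \<and> k \<notin> G \<and> 0 < e k}.
          (- 1) ^ card {l \<in> G. l < k} * c (e(k := e k - 1), insert k G))
     else 0)"

definition kscale :: "'k::field \<Rightarrow> ('x \<Rightarrow> 'k) \<Rightarrow> ('x \<Rightarrow> 'k)" where
  "kscale a f = (\<lambda>x. a * f x)"

definition kdim :: "('x \<Rightarrow> 'k::field) set \<Rightarrow> nat" where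
  "kdim V = vector_space.dim kscale V"

text \<open>Graded Betti number \<beta>_{i,j}(T/J) = dim_k Tor_i^T(T/J, k)_j = dim_k H_i(K(y; T/J))_j.\<close>

definition betti :: "'k::field itself \<Rightarrow> nat \<Rightarrow> (nat \<Rightarrow> nat) set \<Rightarrow> nat \<Rightarrow> nat \<Rightarrow> nat" where
  "betti K n J i j =
     kdim {c \<in> koszul_chains K n J i j. koszul_d n J c = 0}
     - kdim (koszul_d n J ` koszul_chains K n J (Suc i) j)"

definition cm_reg :: "'k::field itself \<Rightarrow> nat \<Rightarrow> (nat \<Rightarrow> nat) set \<Rightarrow> int" where
  "cm_reg K n J = Max {int j - int i | i j. betti K n J i j \<noteq> 0}"

end

theory Submission
  imports Defs
begin

lemma in_J_big:
  assumes "e \<in> monT n" "e i \<ge> 2"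
  shows "e \<in> image_ideal_monomials n C"
proof -
  have "i < n"
  proof (rule ccontr)
    assume "\<not> i < n" then have "e i = 0" using assms(1) by (auto simp: monT_def)
    with assms(2) show False by simp
  qed
  define a where "a = (\<lambda>(j,b). if j = i then (if b then e j - 1 else (1::nat)) else (if b then e j else 0))"
  have pa: "pi_mon a = e" using assms(2) by (auto simp: pi_mon_def a_def fun_eq_iff)
  have am: "a \<in> monS n" using assms \<open>i < n\<close> by (auto simp: monS_def monT_def a_def)
  have nf: "\<not> suboplex_face n C {v. a v \<noteq> 0}"
  proof
    assume "suboplex_face n C {v. a v \<noteq> 0}"
    then obtain f where "f \<in> C" and sub: "{v. a v \<noteq> 0} \<subseteq> {(i, f i) | i. i < n}"
      by (auto simp: suboplex_face_def)
    have "(i, False) \<in> {v. a v \<noteq> 0}" "(i, True) \<in> {v. a v \<noteq> 0}" using assms(2) by (auto simp: a_def)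
    with sub have "f i = False" "f i = True" by blast+
    then show False by simp
  qed
  show ?thesis unfolding image_ideal_monomials_def SR_monomials_def
    using am nf pa by blast
qed

lemma in_J_notshatt:
  assumes "e \<in> monT n" "\<forall>i. e i \<le> 1" "\<not> shattered C {i. e i \<noteq> 0}"
  shows "e \<in> image_ideal_monomials n C"
proof -
  let ?U = "{i. e i \<noteq> 0}"
  obtain g where g: "g \<in> ?U \<rightarrow>\<^sub>E (UNIV::bool set)" and ng: "\<forall>f\<in>C. \<exists>i\<in>?U. f i \<noteq> g i"
    using assms(3) by (auto simp: shattered_def)
  define a where "a = (\<lambda>(j,b). if j \<in> ?U \<and> b = g j then (1::nat) else 0)"
  have pa: "pi_mon a = e"
  proof
    fix j show "pi_mon a j = e j" using assms(2)[rule_format, of j]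
      by (cases "e j = 0") (auto simp: pi_mon_def a_def)
  qed
  have am: "a \<in> monS n" using assms(1) by (auto simp: monS_def monT_def a_def)
  have nf: "\<not> suboplex_face n C {v. a v \<noteq> 0}"
  proof
    assume "suboplex_face n C {v. a v \<noteq> 0}"
    then obtain f where "f \<in> C" and sub: "{v. a v \<noteq> 0} \<subseteq> {(i, f i) | i. i < n}"
      by (auto simp: suboplex_face_def)
    then obtain i where "i \<in> ?U" "f i \<noteq> g i" using ng by blast
    then have "(i, g i) \<in> {v. a v \<noteq> 0}" by (auto simp: a_def)
    with sub have "g i = f i" by blast
    with \<open>f i \<noteq> g i\<close> show False by simp
  qed
  show ?thesis unfolding image_ideal_monomials_def SR_monomials_def
    using am nf pa by blast
qed

lemma notin_J_shatt:
  assumes "e \<in> monT n" "\<forall>i. e i \<le> 1" "shattered C {i. e i \<noteq> 0}"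
  shows "e \<notin> image_ideal_monomials n C"
proof
  let ?U = "{i. e i \<noteq> 0}"
  assume "e \<in> image_ideal_monomials n C"
  then obtain a where am: "a \<in> monS n" and nf: "\<not> suboplex_face n C {v. a v \<noteq> 0}" and pa: "pi_mon a = e"
    unfolding image_ideal_monomials_def SR_monomials_def by blast
  define g where "g = (\<lambda>j. if j \<in> ?U then a (j, True) \<noteq> 0 else undefined)"
  have "g \<in> ?U \<rightarrow>\<^sub>E (UNIV::bool set)" by (auto simp: g_def)
  then obtain f where f: "f \<in> C" "\<forall>i\<in>?U. f i = g i" using assms(3) by (auto simp: shattered_def)
  have "{v. a v \<noteq> 0} \<subseteq> {(i, f i) | i. i < n}"
  proof
    fix v assume v: "v \<in> {v. a v \<noteq> 0}"
    obtain j b where vj: "v = (j, b)" by (cases v)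
    have sumj: "a (j, False) + a (j, True) = e j" using pa by (auto simp: pi_mon_def fun_eq_iff)
    have "j < n"
    proof (rule ccontr)
      assume "\<not> j < n" then have "a (j, b) = 0" using am by (auto simp: monS_def)
      with v vj show False by simp
    qed
    have "e j \<noteq> 0" using sumj v vj by (cases b) auto
    then have ej: "e j = 1" using assms(2) by (metis le_antisym less_one not_le)
    have "b = f j"
    proof (cases b)
      case True then show ?thesis using f \<open>e j \<noteq> 0\<close> v vj by (auto simp: g_def)
    next
      case False
      then have "a (j, True) = 0" using sumj ej v vj by auto
      then show ?thesis using f \<open>e j \<noteq> 0\<close> False by (auto simp: g_def)
    qed
    then show "v \<in> {(i, f i) | i. i < n}" using vj \<open>j < n\<close> by auto
  qed
  then show False using nf f(1) unfolding suboplex_face_def by blast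
qed

lemma std_char:
  "e \<in> std_mons n (image_ideal_monomials n C) \<longleftrightarrow>
     e \<in> monT n \<and> (\<forall>i. e i \<le> 1) \<and> shattered C {i. e i \<noteq> 0}"
proof
  assume h: "e \<in> std_mons n (image_ideal_monomials n C)"
  then have m: "e \<in> monT n" and nJ: "e \<notin> image_ideal_monomials n C" by (auto simp: std_mons_def)
  have le: "\<forall>i. e i \<le> 1"
  proof
    fix i show "e i \<le> 1" using in_J_big[OF m, of i C] nJ by linarith
  qed
  show "e \<in> monT n \<and> (\<forall>i. e i \<le> 1) \<and> shattered C {i. e i \<noteq> 0}"
    using m le nJ in_J_notshatt[OF m le] by blast
next
  assume "e \<in> monT n \<and> (\<forall>i. e i \<le> 1) \<and> shattered C {i. e i \<noteq> 0}"
  then show "e \<in> std_mons n (image_ideal_monomials n C)"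
    using notin_J_shatt[of e n C] by (auto simp: std_mons_def)
qed

lemma mdeg_01:
  assumes "e \<in> monT n" "\<forall>i. e i \<le> 1"
  shows "mdeg n e = card {i. e i \<noteq> 0}"
proof -
  have U: "{i. e i \<noteq> 0} = {i\<in>{..<n}. e i \<noteq> 0}" 
  proof (intro set_eqI iffI)
    fix i assume "i \<in> {i. e i \<noteq> 0}"
    moreover have "\<not> i < n \<Longrightarrow> e i = 0" using assms(1) by (auto simp: monT_def)
    ultimately show "i \<in> {i\<in>{..<n}. e i \<noteq> 0}" by auto
  qed auto
  have "mdeg n e = (\<Sum>i<n. if e i \<noteq> 0 then 1 else 0)"
    unfolding mdeg_def proof (intro sum.cong refl)
    fix i show "e i = (if e i \<noteq> 0 then 1 else 0)" using assms(2)[rule_format, of i] by auto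
  qed
  also have "\<dots> = card {i\<in>{..<n}. e i \<noteq> 0}"
    by (simp add: sum.inter_filter[symmetric])
  finally show ?thesis using U by simp
qed


lemma vs_kscale: "vector_space (kscale :: 'k::field \<Rightarrow> ('x \<Rightarrow> 'k) \<Rightarrow> ('x \<Rightarrow> 'k))"
  by unfold_locales (auto simp: kscale_def fun_eq_iff algebra_simps)

lemma kdim_zero:
  fixes V :: "('x \<Rightarrow> 'k::field) set"
  assumes "V \<subseteq> {0}"
  shows "kdim V = 0"
proof -
  interpret V: vector_space "kscale :: 'k \<Rightarrow> ('x \<Rightarrow> 'k) \<Rightarrow> ('x \<Rightarrow> 'k)" by (rule vs_kscale)
  have "V.dim V \<le> card ({}::('x \<Rightarrow> 'k) set)" using assms by (intro V.dim_le_card) auto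
  then show ?thesis by (simp add: kdim_def)
qed

lemma chains_span:
  fixes c :: "'x \<Rightarrow> 'k::field"
  assumes "finite K" "\<forall>x. c x \<noteq> 0 \<longrightarrow> x \<in> K"
  shows "c \<in> module.span kscale ((\<lambda>x y. if y = x then 1 else 0) ` K)"
  using assms
proof (induction K arbitrary: c rule: finite_induct)
  interpret V: vector_space "kscale :: 'k \<Rightarrow> ('x \<Rightarrow> 'k) \<Rightarrow> ('x \<Rightarrow> 'k)" by (rule vs_kscale)
  case empty
  then have "c = 0" by (auto simp: fun_eq_iff zero_fun_def)
  then show ?case by (simp add: V.span_zero zero_fun_def)
next
  interpret V: vector_space "kscale :: 'k \<Rightarrow> ('x \<Rightarrow> 'k) \<Rightarrow> ('x \<Rightarrow> 'k)" by (rule vs_kscale)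
  case (insert x K)
  let ?d = "\<lambda>x y. if y = x then (1::'k) else 0"
  have "c(x := 0) \<in> V.span (?d ` K)" using insert by (intro insert.IH) auto
  then have 1: "c(x := 0) \<in> V.span (?d ` insert x K)" by (rule set_mp[OF V.span_mono, rotated]) auto
  have "?d x \<in> V.span (?d ` insert x K)" by (intro V.span_base) auto
  then have 2: "kscale (c x) (?d x) \<in> V.span (?d ` insert x K)" by (rule V.span_scale)
  have "c = c(x := 0) + kscale (c x) (?d x)" by (auto simp: fun_eq_iff kscale_def)
  then show ?case using V.span_add[OF 1 2] by simp
qed

lemma kdim_pos:
  fixes V :: "('x \<Rightarrow> 'k::field) set"
  assumes "v \<in> V" "v \<noteq> 0" "finite K" "\<forall>c\<in>V. \<forall>x. c x \<noteq> 0 \<longrightarrow> x \<in> K"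
  shows "kdim V \<ge> 1"
proof -
  interpret V: vector_space "kscale :: 'k \<Rightarrow> ('x \<Rightarrow> 'k) \<Rightarrow> ('x \<Rightarrow> 'k)" by (rule vs_kscale)
  let ?W = "(\<lambda>x y. if y = x then (1::'k) else 0) ` K"
  have VW: "V \<subseteq> V.span ?W" using assms(3,4) chains_span by blast
  obtain B where B: "B \<subseteq> V" "V.independent B" "V \<subseteq> V.span B" "card B = V.dim V"
    by (rule V.basis_exists)
  have "finite B" using V.independent_span_bound[of ?W B] B VW assms(3) by auto
  moreover have "B \<noteq> {}" using B(3) assms(1,2) by auto
  ultimately have "card B > 0" by (simp add: card_gt_0_iff)
  then show ?thesis using B(4) by (simp add: kdim_def)
qed


lemma mdeg_dec:
  assumes "k < n" "0 < e k"
  shows "mdeg n e = mdeg n (e(k := e k - 1)) + 1"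
proof -
  have k: "k \<in> {..<n}" using assms by auto
  have "mdeg n e = e k + (\<Sum>i\<in>{..<n} - {k}. e i)" unfolding mdeg_def by (rule sum.remove[OF _ k]) auto
  moreover have "mdeg n (e(k := e k - 1)) = (e k - 1) + (\<Sum>i\<in>{..<n} - {k}. (e(k := e k - 1)) i)"
    unfolding mdeg_def using sum.remove[OF _ k, of "e(k := e k - 1)"] by simp
  moreover have "(\<Sum>i\<in>{..<n} - {k}. (e(k := e k - 1)) i) = (\<Sum>i\<in>{..<n} - {k}. e i)"
    by (intro sum.cong) auto
  ultimately show ?thesis using assms(2) by simp
qed

lemma SS_facts:
  assumes "C \<noteq> {}"
  shows "finite {card U | U. U \<subseteq> {0..<n} \<and> shattered C U}"
    and "{card U | U. U \<subseteq> {0..<n} \<and> shattered C U} \<noteq> {}"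
proof -
  have "{card U | U. U \<subseteq> {0..<n} \<and> shattered C U} \<subseteq> {0..n}"
  proof
    fix x assume "x \<in> {card U | U. U \<subseteq> {0..<n} \<and> shattered C U}"
    then obtain U where "x = card U" "U \<subseteq> {0..<n}" by blast
    then have "x \<le> card {0..<n}" using card_mono[of "{0..<n}" U] by simp
    then show "x \<in> {0..n}" by simp
  qed
  then show "finite {card U | U. U \<subseteq> {0..<n} \<and> shattered C U}" using finite_subset by blast
  have "shattered C {}" using assms by (auto simp: shattered_def)
  then show "{card U | U. U \<subseteq> {0..<n} \<and> shattered C U} \<noteq> {}" by blast
qed

lemma std_le:
  assumes "C \<noteq> {}" "e \<in> std_mons n (image_ideal_monomials n C)"
  shows "mdeg n e \<le> vc_dim n C"
proof -
  have e: "e \<in> monT n" "\<forall>i. e i \<le> 1" "shattered C {i. e i \<noteq> 0}" using assms(2) std_char by blast+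
  have sub: "{i. e i \<noteq> 0} \<subseteq> {0..<n}"
  proof
    fix i assume "i \<in> {i. e i \<noteq> 0}"
    moreover have "\<not> i < n \<Longrightarrow> e i = 0" using e(1) by (auto simp: monT_def)
    ultimately show "i \<in> {0..<n}" by auto
  qed
  have "card {i. e i \<noteq> 0} \<in> {card U | U. U \<subseteq> {0..<n} \<and> shattered C U}" using sub e(3) by blast
  then have "card {i. e i \<noteq> 0} \<le> vc_dim n C" unfolding vc_dim_def by (rule Max_ge[OF SS_facts(1)[OF assms(1)]])
  then show ?thesis using mdeg_01[OF e(1,2)] by simp
qed

lemma std_ex:
  assumes "C \<noteq> {}"
  shows "\<exists>e \<in> std_mons n (image_ideal_monomials n C). mdeg n e = vc_dim n C"
proof -
  have "vc_dim n C \<in> {card U | U. U \<subseteq> {0..<n} \<and> shattered C U}"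
    unfolding vc_dim_def using SS_facts[OF assms] by (rule Max_in)
  then obtain U where U0: "vc_dim n C = card U" "U \<subseteq> {0..<n}" "shattered C U" by (rule CollectE) (elim exE conjE)
  have U: "U \<subseteq> {0..<n}" "shattered C U" "card U = vc_dim n C" using U0 by simp_all
  define e where "e = (\<lambda>i. if i \<in> U then 1 else (0::nat))"
  have 1: "e \<in> monT n" using U(1) by (auto simp: e_def monT_def)
  have 2: "\<forall>i. e i \<le> 1" by (auto simp: e_def)
  have 3: "{i. e i \<noteq> 0} = U" by (auto simp: e_def)
  have "shattered C {i. e i \<noteq> 0}" using 3 U(2) by simp
  then have "e \<in> std_mons n (image_ideal_monomials n C)" using std_char 1 2 by blast
  moreover have "mdeg n e = vc_dim n C" using mdeg_01[OF 1 2] 3 U(3) by simp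
  ultimately show ?thesis by blast
qed

lemma std_finite: "finite (std_mons n (image_ideal_monomials n C))"
proof -
  have "std_mons n (image_ideal_monomials n C) \<subseteq> (\<lambda>U i. if i \<in> U then 1 else 0) ` Pow {0..<n}"
  proof
    fix e assume "e \<in> std_mons n (image_ideal_monomials n C)"
    then have e: "e \<in> monT n" "\<forall>i. e i \<le> 1" using std_char by blast+
    have "e = (\<lambda>i. if i \<in> {i\<in>{0..<n}. e i \<noteq> 0} then 1 else 0)"
    proof
      fix i
      have "\<not> i < n \<Longrightarrow> e i = 0" using e(1) by (auto simp: monT_def)
      then show "e i = (if i \<in> {i\<in>{0..<n}. e i \<noteq> 0} then 1 else 0)" using e(2)[rule_format, of i] by auto
    qed
    then show "e \<in> (\<lambda>U i. if i \<in> U then 1 else 0) ` Pow {0..<n}" by blast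
  qed
  then show ?thesis by (rule finite_subset) auto
qed

lemma basis_finite: "finite (koszul_basis n (image_ideal_monomials n C) i j)"
proof -
  have "koszul_basis n (image_ideal_monomials n C) i j \<subseteq> std_mons n (image_ideal_monomials n C) \<times> Pow {0..<n}"
    by (auto simp: koszul_basis_def)
  moreover have "finite (std_mons n (image_ideal_monomials n C) \<times> Pow {0..<n})" using std_finite by auto
  ultimately show ?thesis by (rule finite_subset)
qed

lemma betti_nz:
  assumes "betti K n J i j \<noteq> 0"
  shows "\<exists>e\<in>std_mons n J. mdeg n e + i = j"
proof (rule ccontr)
  assume "\<not> ?thesis"
  then have "koszul_basis n J i j = {}" by (auto simp: koszul_basis_def)
  then have "koszul_chains K n J i j \<subseteq> {0}" by (auto simp: koszul_chains_def fun_eq_iff)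
  then have "kdim {c \<in> koszul_chains K n J i j. koszul_d n J c = 0} = 0" by (intro kdim_zero) auto
  then show False using assms by (simp add: betti_def)
qed

lemma koszul_d_zero: "koszul_d n J (0 :: _ \<Rightarrow> 'k::field) = 0"
  by (auto simp: koszul_d_def fun_eq_iff)

theorem mainTheorem3:
  fixes n :: nat and C :: "(nat \<Rightarrow> bool) set"
  assumes "function_class n C" and "C \<noteq> {}"
  shows "int (vc_dim n C) = cm_reg TYPE('k::field) n (image_ideal_monomials n C)"
proof -
  define J where "J = image_ideal_monomials n C"
  define D where "D = vc_dim n C"
  define S where "S = {int j - int i | i j. betti TYPE('k) n J i j \<noteq> 0}"
  have Sle: "S \<subseteq> {0..int D}"
  proof
    fix s assume "s \<in> S"
    then obtain i j where s: "s = int j - int i" "betti TYPE('k) n J i j \<noteq> 0" by (auto simp: S_def)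
    then obtain e where "e \<in> std_mons n J" "mdeg n e + i = j" using betti_nz by blast
    moreover then have "mdeg n e \<le> D" using std_le[OF assms(2)] by (simp add: J_def D_def)
    ultimately show "s \<in> {0..int D}" using s(1) by auto
  qed
  obtain e0 where e0: "e0 \<in> std_mons n J" "mdeg n e0 = D" using std_ex[OF assms(2)] by (auto simp: J_def D_def)
  define \<delta> where "\<delta> = (\<lambda>x. if x = (e0, {0..<n}) then (1::'k) else 0)"
  have bas: "(e0, {0..<n}) \<in> koszul_basis n J n (D + n)" using e0 by (auto simp: koszul_basis_def)
  have dch: "\<delta> \<in> koszul_chains TYPE('k) n J n (D + n)" using bas by (auto simp: koszul_chains_def \<delta>_def)
  have dd: "koszul_d n J \<delta> = 0"
  proof
    fix x :: "(nat \<Rightarrow> nat) \<times> nat set"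
    obtain e G where x: "x = (e, G)" by (cases x)
    have "\<delta> (e(k := e k - 1), insert k G) = 0" if "e \<in> std_mons n J" "k < n" "0 < e k" for k
    proof (rule ccontr)
      assume "\<delta> (e(k := e k - 1), insert k G) \<noteq> 0"
      then have "(e(k := e k - 1), insert k G) = (e0, {0..<n})" unfolding \<delta>_def by (rule contrapos_np) simp
      then have "e(k := e k - 1) = e0" by simp
      then have "mdeg n e = D + 1" using mdeg_dec[of k n e, OF that(2,3)] e0(2) by simp
      moreover have "mdeg n e \<le> D" using std_le[OF assms(2)] that(1) by (simp add: J_def D_def)
      ultimately show False by simp
    qed
    then show "koszul_d n J \<delta> x = 0 x" unfolding x koszul_d_def
      by (simp add: sum.neutral)
  qed
  have "\<delta> \<noteq> 0" by (auto simp: \<delta>_def fun_eq_iff)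
  have Zpos: "kdim {c \<in> koszul_chains TYPE('k) n J n (D + n). koszul_d n J c = 0} \<ge> 1"
  proof (rule kdim_pos[of \<delta> _ "koszul_basis n J n (D + n)"])
    show "\<delta> \<in> {c \<in> koszul_chains TYPE('k) n J n (D + n). koszul_d n J c = 0}" using dch dd by simp
    show "\<delta> \<noteq> 0" by fact
    show "finite (koszul_basis n J n (D + n))" unfolding J_def by (rule basis_finite)
    show "\<forall>c\<in>{c \<in> koszul_chains TYPE('k) n J n (D + n). koszul_d n J c = 0}. \<forall>x. c x \<noteq> 0 \<longrightarrow> x \<in> koszul_basis n J n (D + n)"
      unfolding koszul_chains_def by blast
  qed
  have "koszul_basis n J (Suc n) (D + n) = {}"
    by (auto simp: koszul_basis_def dest!: card_mono[OF finite_atLeastLessThan])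
  then have "koszul_chains TYPE('k) n J (Suc n) (D + n) \<subseteq> {0}" by (auto simp: koszul_chains_def fun_eq_iff)
  then have "koszul_d n J ` koszul_chains TYPE('k) n J (Suc n) (D + n) \<subseteq> {0}"
    using koszul_d_zero by auto
  then have Bz: "kdim (koszul_d n J ` koszul_chains TYPE('k) n J (Suc n) (D + n)) = 0" by (rule kdim_zero)
  have "betti TYPE('k) n J n (D + n) \<noteq> 0" using Zpos Bz by (simp add: betti_def)
  moreover have "int D = int (D + n) - int n" by simp
  ultimately have DS: "int D \<in> S" unfolding S_def by blast
  have fin: "finite S" using Sle by (rule finite_subset) simp
  have "Max S = int D"
  proof (rule Max_eqI[OF fin])
    show "y \<le> int D" if "y \<in> S" for y using Sle that by auto
    show "int D \<in> S" by (rule DS)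
  qed
  moreover have "cm_reg TYPE('k) n J = Max S" unfolding cm_reg_def S_def by (rule refl)
  ultimately show ?thesis unfolding J_def D_def by simp
qed

end
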